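(* Let $m\ge2$ and $a,b\in(0,1/m)$. Then $\Sigma_{HC}$ is the natural extension of $\Sigma^+_{HC}$, i.e. $$\Sigma_{HC}=\{\omega\in\{1,\ldots,2m\}^{\mathbb Z}: (\omega_{n-k})_{n\in\mathbb Z^+}\in\Sigma_{HC}^+\text{ for every } k\ge1\}.$$
   Context: $F_a(x)=\frac{x-(i-1)a}{a}$ on $[(i-1)a,ia)$, $i\in\{1,\ldots,m\}$, $F_a(x)=\frac{x-ma}{1-ma}$ on $[ma,1]$. $\Omega_i^+=[(i-1)a,ia)\times[0,1]$ for $i\le m$; $\Omega_i^+=[ma,1]\times[\frac{i-m-1}{m},\frac{i-m}{m})$ for $m+1\le i\le2m-1$; $\Omega_{2m}^+=[ma,1]\times[\frac{m-1}{m},1]$. $f_a(x,y)=(F_a(x),\frac{y}{m}+\frac{i-1}{m})$ on $\Omega_i^+$ for $i\le m$, $f_a(x,y)=(F_a(x),my-i+m+1)$ on $\Omega_i^+$ for $i\ge m+1$. $\Omega_i=\Omega_i^+\times[0,1]$, $f_{a,b}(x,y,z)=(f_a(x,y),(1-mb)z)$ on $\Omega_i$ for $i\le m$, $f_{a,b}(x,y,z)=(f_a(x,y),bz+1-mb+b(i-m-1))$ on $\Omega_i$ for $i\ge m+1$ (a bijection of $[0,1]^3$). $X_a=\bigcap_{n\ge0}f_a^{-n}(\bigcup_i\mathrm{int}\,\Omega_i^+)$, $X_{a,b}=\bigcap_{n\in\mathbb Z}f_{a,b}^{-n}(\bigcup_i\mathrm{int}\,\Omega_i)$; $\pi_a(p)=(\omega_n)_{n\ge0}$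 with $f_a^n(p)\in\mathrm{int}\,\Omega^+_{\omega_n}$, $\pi_{a,b}(p)=(\omega_n)_{n\in\mathbb Z}$ with $f_{a,b}^n(p)\in\mathrm{int}\,\Omega_{\omega_n}$. $\Sigma_{HC}^+=\mathrm{cl}(\pi_a(X_a))$, $\Sigma_{HC}=\mathrm{cl}(\pi_{a,b}(X_{a,b}))$ (closures in product topologies). *)

theory Defs
  imports "HOL-Analysis.Analysis"
begin

definition OmegaP :: "nat \<Rightarrow> real \<Rightarrow> nat \<Rightarrow> (real \<times> real) set" where
  "OmegaP m a i =
    (if 1 \<le> i \<and> i \<le> m then {(real i - 1) * a ..< real i * a} \<times> {0..1}
     else if m + 1 \<le> i \<and> i \<le> 2*m - 1 then
       {real m * a .. 1} \<times> {(real i - real m - 1) / real m ..< (real i - real m) / real m}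
     else if i = 2*m then {real m * a .. 1} \<times> {(real m - 1) / real m .. 1}
     else {})"

definition Fa :: "nat \<Rightarrow> real \<Rightarrow> real \<Rightarrow> real" where
  "Fa m a x =
    (if x < real m * a then (x - real (nat \<lfloor>x / a\<rfloor>) * a) / a
     else (x - real m * a) / (1 - real m * a))"

text \<open>The index of the region containing p (meaningful on the unit square).\<close>
definition idxP :: "nat \<Rightarrow> real \<Rightarrow> real \<times> real \<Rightarrow> nat" where
  "idxP m a p = (SOME i. i \<in> {1..2*m} \<and> p \<in> OmegaP m a i)"

definition fa :: "nat \<Rightarrow> real \<Rightarrow> real \<times> real \<Rightarrow> real \<times> real" where
  "fa m a p = (let (x, y) = p; i = idxP m a p in
     if i \<le> m then (Fa m a x, y / real m + (real i - 1) / real m)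
     else (Fa m a x, real m * y - real i + real m + 1))"

definition OmegaF :: "nat \<Rightarrow> real \<Rightarrow> nat \<Rightarrow> (real \<times> real \<times> real) set" where
  "OmegaF m a i = {(x, y, z). (x, y) \<in> OmegaP m a i \<and> z \<in> {0..1}}"

definition fab :: "nat \<Rightarrow> real \<Rightarrow> real \<Rightarrow> real \<times> real \<times> real \<Rightarrow> real \<times> real \<times> real" where
  "fab m a b p = (let (x, y, z) = p; i = idxP m a (x, y); (x', y') = fa m a (x, y) in
     if i \<le> m then (x', y', (1 - real m * b) * z)
     else (x', y', b * z + 1 - real m * b + b * (real i - real m - 1)))"

definition Xa :: "nat \<Rightarrow> real \<Rightarrow> (real \<times> real) set" where
  "Xa m a = (\<Inter>n. (fa m a ^^ n) -` (\<Union>i\<in>{1..2*m}. interior (OmegaP m a i)))"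

definition good_orbit :: "nat \<Rightarrow> real \<Rightarrow> real \<Rightarrow> (int \<Rightarrow> real \<times> real \<times> real) \<Rightarrow> bool" where
  "good_orbit m a b q \<longleftrightarrow> (\<forall>n. fab m a b (q n) = q (n + 1)) \<and>
      (\<forall>n. q n \<in> (\<Union>i\<in>{1..2*m}. interior (OmegaF m a i)))"

definition Xab :: "nat \<Rightarrow> real \<Rightarrow> real \<Rightarrow> (real \<times> real \<times> real) set" where
  "Xab m a b = {p. \<exists>q. q 0 = p \<and> good_orbit m a b q}"

definition pia :: "nat \<Rightarrow> real \<Rightarrow> real \<times> real \<Rightarrow> nat \<Rightarrow> nat" where
  "pia m a p = (\<lambda>n. THE i. i \<in> {1..2*m} \<and> (fa m a ^^ n) p \<in> interior (OmegaP m a i))"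

definition piab :: "nat \<Rightarrow> real \<Rightarrow> real \<Rightarrow> real \<times> real \<times> real \<Rightarrow> int \<Rightarrow> nat" where
  "piab m a b p = (let q = (SOME q. q 0 = p \<and> good_orbit m a b q) in
     (\<lambda>n. THE i. i \<in> {1..2*m} \<and> q n \<in> interior (OmegaF m a i)))"

definition SigmaHCplus :: "nat \<Rightarrow> real \<Rightarrow> (nat \<Rightarrow> nat) set" where
  "SigmaHCplus m a = closure (pia m a ` Xa m a)"

definition SigmaHC :: "nat \<Rightarrow> real \<Rightarrow> real \<Rightarrow> (int \<Rightarrow> nat) set" where
  "SigmaHC m a b = closure (piab m a b ` Xab m a b)"

end

theory Submission
  imports Defs
begin

lemma int_F_gen:
  fixes S :: "(real \<times> real) set"
  shows "interior {(x, y, z). (x, y) \<in> S \<and> z \<in> {0..1::real}} =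
         {(x, y, z). (x, y) \<in> interior S \<and> 0 < z \<and> z < 1}"
proof (rule equalityI)
  let ?F = "{(x, y, z). (x, y) \<in> S \<and> z \<in> {0..1::real}}"
  let ?T = "{(x, y, z). (x, y) \<in> interior S \<and> 0 < z \<and> z < (1::real)}"
  have eq: "?T = (\<lambda>p. (fst p, fst (snd p))) -` interior S \<inter> (\<lambda>p. snd (snd p)) -` {0<..<1::real}"
    by (auto simp: split_def)
  have "open ((\<lambda>p::real\<times>real\<times>real. (fst p, fst (snd p))) -` interior S)"
    by (rule open_vimage) (auto intro!: continuous_intros)
  moreover have "open ((\<lambda>p::real\<times>real\<times>real. snd (snd p)) -` {0<..<1::real})"
    by (rule open_vimage) (auto intro!: continuous_intros)
  ultimately have "open ?T" unfolding eq by (rule open_Int)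
  moreover have "?T \<subseteq> ?F"
    using interior_subset[of S] by (auto simp: split_def)
  ultimately show "?T \<subseteq> interior ?F" by (rule interior_maximal[rotated])
  show "interior ?F \<subseteq> ?T"
  proof
    fix p assume h: "p \<in> interior ?F"
    obtain x y z where p: "p = (x, y, z)" by (cases p) auto
    have o1: "open ((\<lambda>q::real\<times>real. (fst q, snd q, z)) -` interior ?F)"
      by (rule open_vimage) (auto intro!: continuous_intros)
    have "(\<lambda>q::real\<times>real. (fst q, snd q, z)) -` interior ?F \<subseteq> S"
    proof
      fix q assume "q \<in> (\<lambda>q::real\<times>real. (fst q, snd q, z)) -` interior ?F"
      then have "(fst q, snd q, z) \<in> ?F" using interior_subset[of ?F] by blast
      then show "q \<in> S" by simp
    qed
    then have "(\<lambda>q::real\<times>real. (fst q, snd q, z)) -` interior ?F \<subseteq> interior S"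
      using o1 by (rule interior_maximal)
    then have 1: "(x, y) \<in> interior S" using h p by auto
    have o2: "open ((\<lambda>w::real. (x, y, w)) -` interior ?F)"
      by (rule open_vimage) (auto intro!: continuous_intros)
    have "(\<lambda>w::real. (x, y, w)) -` interior ?F \<subseteq> {0..1}"
    proof
      fix w assume "w \<in> (\<lambda>w::real. (x, y, w)) -` interior ?F"
      then have "(x, y, w) \<in> ?F" using interior_subset[of ?F] by blast
      then show "w \<in> {0..1}" by simp
    qed
    then have "(\<lambda>w::real. (x, y, w)) -` interior ?F \<subseteq> interior {0..1}"
      using o2 by (rule interior_maximal)
    then have "z \<in> {0<..<1}" using h p by (auto simp: interior_atLeastAtMost_real)
    then show "p \<in> ?T" using 1 p by simp
  qed
qed

locale hc =
  fixes m :: nat and a b :: real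
  assumes m2: "m \<ge> 2" and a0: "0 < a" and a1: "a < 1 / real m" and b0: "0 < b" and b1: "b < 1 / real m"
begin

lemma ma1: "real m * a < 1" using a1 m2 by (simp add: field_simps)
lemma mb1: "real m * b < 1" using b1 m2 by (simp add: field_simps)
lemma mpos: "real m > 0" using m2 by simp

definition box :: "nat \<Rightarrow> real \<Rightarrow> real \<Rightarrow> bool" where
  "box i x y = (if i \<le> m then (real i - 1) * a < x \<and> x < real i * a \<and> 0 < y \<and> y < 1
     else real m * a < x \<and> x < 1 \<and> (real i - real m - 1) / real m < y \<and> y < (real i - real m) / real m)"

lemma int_P:
  assumes "i \<in> {1..2*m}"
  shows "interior (OmegaP m a i) = {(x, y). box i x y}"
proof -
  consider "i \<le> m" | "m + 1 \<le> i \<and> i \<le> 2*m - 1" | "i = 2*m" using assms by force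
  then show ?thesis
  proof cases
    case 1
    have "OmegaP m a i = {(real i - 1) * a ..< real i * a} \<times> {0..1}"
      using 1 assms by (simp add: OmegaP_def)
    then have "interior (OmegaP m a i) = {(real i - 1) * a <..< real i * a} \<times> {0<..<1}"
      by (simp add: interior_Times interior_atLeastLessThan interior_atLeastAtMost_real)
    then show ?thesis using 1 by (auto simp: box_def)
  next
    case 2
    have "OmegaP m a i = {real m * a .. 1} \<times> {(real i - real m - 1) / real m ..< (real i - real m) / real m}"
      using 2 assms by (simp add: OmegaP_def)
    then have "interior (OmegaP m a i) = {real m * a <..< 1} \<times> {(real i - real m - 1) / real m <..< (real i - real m) / real m}"
      by (simp add: interior_Times interior_atLeastLessThan interior_atLeastAtMost_real)
    then show ?thesis using 2 by (auto simp: box_def)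
  next
    case 3
    have "\<not> (m + 1 \<le> i \<and> i \<le> 2*m - 1)" "\<not> i \<le> m" using 3 m2 by auto
    then have "OmegaP m a i = {real m * a .. 1} \<times> {(real m - 1) / real m .. 1}"
      using 3 by (simp add: OmegaP_def)
    then have "interior (OmegaP m a i) = {real m * a <..< 1} \<times> {(real m - 1) / real m <..< 1}"
      by (simp add: interior_Times interior_atLeastLessThan interior_atLeastAtMost_real)
    moreover have e: "(real i - real m - 1) / real m = (real m - 1) / real m" "(real i - real m) / real m = 1"
      using 3 mpos by auto
    have "box i x y \<longleftrightarrow> real m * a < x \<and> x < 1 \<and> (real m - 1) / real m < y \<and> y < 1" for x y
      unfolding box_def e using \<open>\<not> i \<le> m\<close> by simp
    ultimately show ?thesis by auto
  qed
qed

lemma div_lt: "u / real m < v / real m \<Longrightarrow> u < v"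
  using mpos by (simp add: divide_simps)
lemma div_le: "u / real m \<le> v / real m \<Longrightarrow> u \<le> v"
  using mpos by (simp add: divide_simps)

lemma OmegaP_weak:
  assumes "(x, y) \<in> OmegaP m a j" "j \<in> {1..2*m}"
  shows "if j \<le> m then (real j - 1) * a \<le> x \<and> x < real j * a
         else real m * a \<le> x \<and> (real j - real m - 1) / real m \<le> y \<and> y \<le> (real j - real m) / real m"
proof -
  consider "j \<le> m" | "m + 1 \<le> j \<and> j \<le> 2*m - 1" | "j = 2*m" using assms by force
  then show ?thesis
  proof cases
    case 1 then show ?thesis using assms by (simp add: OmegaP_def)
  next
    case 2 then show ?thesis using assms by (auto simp: OmegaP_def)
  next
    case 3
    have "\<not> (m + 1 \<le> j \<and> j \<le> 2*m - 1)" "\<not> j \<le> m" using 3 m2 by auto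
    moreover have e: "(real j - real m - 1) / real m = (real m - 1) / real m" "(real j - real m) / real m = 1"
      using 3 mpos by auto
    ultimately show ?thesis using assms 3 by (auto simp: OmegaP_def)
  qed
qed

lemma mem_P_unique:
  assumes bx: "box i x y" and i: "i \<in> {1..2*m}" and j: "j \<in> {1..2*m}" and mem: "(x, y) \<in> OmegaP m a j"
  shows "j = i"
proof -
  note w = OmegaP_weak[OF mem j]
  show ?thesis
  proof (cases "i \<le> m")
    case True
    then have bi: "(real i - 1) * a < x" "x < real i * a" using bx by (auto simp: box_def)
    show ?thesis
    proof (cases "j \<le> m")
      case True
      then have wj: "(real j - 1) * a \<le> x" "x < real j * a" using w by auto
      have "(real j - 1) * a < real i * a" "(real i - 1) * a < real j * a" using wj bi by linarith+
      then have "real j - 1 < real i" "real i - 1 < real j" using a0 by (simp_all add: mult_less_cancel_right_pos)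
      then show ?thesis by linarith
    next
      case False
      then have "real m * a \<le> x" using w by auto
      moreover have "real i * a \<le> real m * a" using \<open>i \<le> m\<close> a0 by (simp add: mult_right_mono)
      ultimately show ?thesis using bi by linarith
    qed
  next
    case False
    then have bi: "real m * a < x" "(real i - real m - 1) / real m < y" "y < (real i - real m) / real m"
      using bx by (auto simp: box_def)
    show ?thesis
    proof (cases "j \<le> m")
      case True
      then have "x < real j * a" using w by auto
      moreover have "real j * a \<le> real m * a" using \<open>j \<le> m\<close> a0 by (simp add: mult_right_mono)
      ultimately show ?thesis using bi by linarith
    next
      case False
      then have wj: "(real j - real m - 1) / real m \<le> y" "y \<le> (real j - real m) / real m" using w by auto
      have "(real j - real m - 1) / real m < (real i - real m) / real m"
           "(real i - real m - 1) / real m < (real j - real m) / real m" using wj bi by linarith+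
      then have "real j - real m - 1 < real i - real m" "real i - real m - 1 < real j - real m"
        by (auto dest: div_lt)
      then show ?thesis by linarith
    qed
  qed
qed

lemma box_in_P: "box i x y \<Longrightarrow> i \<in> {1..2*m} \<Longrightarrow> (x, y) \<in> OmegaP m a i"
  using int_P[of i] interior_subset[of "OmegaP m a i"] by auto

lemma box_in_int: "box i x y \<Longrightarrow> i \<in> {1..2*m} \<Longrightarrow> (x, y) \<in> interior (OmegaP m a i)"
  using int_P[of i] by auto

lemma idx_eq: "box i x y \<Longrightarrow> i \<in> {1..2*m} \<Longrightarrow> idxP m a (x, y) = i"
  unfolding idxP_def
  by (rule some_equality) (auto intro: box_in_P mem_P_unique)

definition code :: "real \<times> real \<Rightarrow> nat" where
  "code u = (THE i. i \<in> {1..2*m} \<and> u \<in> interior (OmegaP m a i))"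

lemma code_eq: "box i x y \<Longrightarrow> i \<in> {1..2*m} \<Longrightarrow> code (x, y) = i"
  unfolding code_def
  by (rule the_equality) (auto intro: box_in_int mem_P_unique dest: subsetD[OF interior_subset])

lemma box_unit: "box i x y \<Longrightarrow> i \<in> {1..2*m} \<Longrightarrow> 0 < x \<and> x < 1 \<and> 0 < y \<and> y < 1"
proof -
  assume bx: "box i x y" and i: "i \<in> {1..2*m}"
  show ?thesis
  proof (cases "i \<le> m")
    case True
    have "real i * a \<le> real m * a" using True a0 by (simp add: mult_right_mono)
    moreover have "0 \<le> (real i - 1) * a" using i a0 by auto
    ultimately show ?thesis using bx True ma1 by (auto simp: box_def)
  next
    case False
    have "0 \<le> (real i - real m - 1) / real m" using False mpos by auto
    moreover have "(real i - real m) / real m \<le> 1" using i mpos by (auto simp: divide_simps)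
    moreover have "0 \<le> real m * a" using a0 by auto
    moreover have "real m * a < x \<and> x < 1 \<and> (real i - real m - 1) / real m < y \<and> y < (real i - real m) / real m"
      using bx False by (simp add: box_def)
    ultimately show ?thesis by linarith
  qed
qed

lemma Fa_box: "box i x y \<Longrightarrow> i \<in> {1..2*m} \<Longrightarrow>
   Fa m a x = (if i \<le> m then (x - (real i - 1) * a) / a else (x - real m * a) / (1 - real m * a))"
proof -
  assume bx: "box i x y" and i: "i \<in> {1..2*m}"
  show ?thesis
  proof (cases "i \<le> m")
    case True
    have bi: "(real i - 1) * a < x" "x < real i * a" using bx True by (auto simp: box_def)
    have "real i * a \<le> real m * a" using True a0 by (simp add: mult_right_mono)
    then have xm: "x < real m * a" using bi by linarith
    have "real i - 1 < x / a" "x / a < real i" using bi a0 by (auto simp: field_simps)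
    then have "\<lfloor>x / a\<rfloor> = int i - 1" by (intro floor_unique) auto
    then have "real (nat \<lfloor>x / a\<rfloor>) = real i - 1" using i by auto
    then show ?thesis using xm True by (simp add: Fa_def)
  next
    case False
    then have "real m * a < x" using bx by (auto simp: box_def)
    then show ?thesis using False by (simp add: Fa_def)
  qed
qed

lemma fa_box: "box i x y \<Longrightarrow> i \<in> {1..2*m} \<Longrightarrow>
   fa m a (x, y) = (if i \<le> m then ((x - (real i - 1) * a) / a, y / real m + (real i - 1) / real m)
                    else ((x - real m * a) / (1 - real m * a), real m * y - real i + real m + 1))"
  by (simp add: fa_def idx_eq Fa_box)

lemma fab_eq: "fab m a b (x, y, z) = (fst (fa m a (x, y)), snd (fa m a (x, y)),
   if idxP m a (x, y) \<le> m then (1 - real m * b) * z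
   else b * z + 1 - real m * b + b * (real (idxP m a (x, y)) - real m - 1))"
  by (simp add: fab_def Let_def split_def)

lemma fab_box: "box i x y \<Longrightarrow> i \<in> {1..2*m} \<Longrightarrow>
   fab m a b (x, y, z) = (if i \<le> m then ((x - (real i - 1) * a) / a, y / real m + (real i - 1) / real m, (1 - real m * b) * z)
          else ((x - real m * a) / (1 - real m * a), real m * y - real i + real m + 1, b * z + 1 - real m * b + b * (real i - real m - 1)))"
  by (simp add: fab_eq idx_eq fa_box)

end

context hc begin

abbreviation UU where "UU \<equiv> (\<Union>i\<in>{1..2*m}. interior (OmegaP m a i))"
abbreviation VV where "VV \<equiv> (\<Union>i\<in>{1..2*m}. interior (OmegaF m a i))"

definition proj :: "real \<times> real \<times> real \<Rightarrow> real \<times> real" where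
  "proj w = (fst w, fst (snd w))"

lemma U_iff: "u \<in> UU \<longleftrightarrow> (\<exists>i\<in>{1..2*m}. box i (fst u) (snd u))"
  using int_P by (cases u) auto

lemma int_F: "i \<in> {1..2*m} \<Longrightarrow> interior (OmegaF m a i) = {(x, y, z). box i x y \<and> 0 < z \<and> z < 1}"
  unfolding OmegaF_def int_F_gen by (simp add: int_P)

lemma V_iff: "w \<in> VV \<longleftrightarrow> (\<exists>i\<in>{1..2*m}. box i (fst w) (fst (snd w))) \<and> 0 < snd (snd w) \<and> snd (snd w) < 1"
proof -
  obtain x y z where w: "w = (x, y, z)" by (cases w) auto
  show ?thesis unfolding w using int_F by auto
qed

lemma V_proj: "w \<in> VV \<Longrightarrow> proj w \<in> UU"
  unfolding V_iff U_iff proj_def by auto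

lemma proj_fab: "proj (fab m a b w) = fa m a (proj w)"
  by (cases w) (simp add: proj_def fab_eq)

lemma mb_pos: "0 < 1 - real m * b" using mb1 by simp

lemma fab_z: assumes "w \<in> VV" shows "0 < snd (snd (fab m a b w)) \<and> snd (snd (fab m a b w)) < 1"
proof -
  obtain x y z where w: "w = (x, y, z)" by (cases w) auto
  obtain i where i: "i \<in> {1..2*m}" "box i x y" and z: "0 < z" "z < 1" using assms unfolding V_iff w by auto
  show ?thesis
  proof (cases "i \<le> m")
    case True
    have "(1 - real m * b) * z < 1 - real m * b" using mb_pos z by simp
    moreover have "0 < (1 - real m * b) * z" using mb_pos z by simp
    moreover have "1 - real m * b \<le> 1" using b0 by simp
    ultimately show ?thesis using True by (simp add: w fab_box[OF i(2) i(1)])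
  next
    case False
    have "0 \<le> b * (real i - real m - 1)" using False b0 by auto
    moreover have "b * (real i - real m - 1) \<le> b * (real m - 1)" using i b0 by (intro mult_left_mono) auto
    moreover have "b * z < b" "0 < b * z" using b0 z by auto
    moreover have "b + 1 - real m * b + b * (real m - 1) = 1" by (simp add: algebra_simps)
    ultimately have "0 < b * z + 1 - real m * b + b * (real i - real m - 1)"
       "b * z + 1 - real m * b + b * (real i - real m - 1) < 1" using mb_pos by linarith+
    then show ?thesis using False by (simp add: w fab_box[OF i(2) i(1)])
  qed
qed

lemma fab_inj:
  assumes w1: "w1 \<in> VV" and w2: "w2 \<in> VV" and eq: "fab m a b w1 = fab m a b w2"
  shows "w1 = w2"
proof -
  obtain x1 y1 z1 where w1e: "w1 = (x1, y1, z1)" by (cases w1) auto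
  obtain x2 y2 z2 where w2e: "w2 = (x2, y2, z2)" by (cases w2) auto
  obtain i where i: "i \<in> {1..2*m}" "box i x1 y1" and z1: "0 < z1" "z1 < 1" using w1 unfolding V_iff w1e by auto
  obtain j where j: "j \<in> {1..2*m}" "box j x2 y2" and z2: "0 < z2" "z2 < 1" using w2 unfolding V_iff w2e by auto
  have u1: "0 < y1" "y1 < 1" using box_unit[OF i(2) i(1)] by auto
  have u2: "0 < y2" "y2 < 1" using box_unit[OF j(2) j(1)] by auto
  note e = eq[unfolded w1e w2e fab_box[OF i(2) i(1)] fab_box[OF j(2) j(1)]]
  have a1': "1 - real m * a \<noteq> 0" using ma1 by simp
  have b1': "1 - real m * b \<noteq> 0" using mb1 by simp
  show ?thesis
  proof (cases "i \<le> m")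
    case True
    show ?thesis
    proof (cases "j \<le> m")
      case True
      with \<open>i \<le> m\<close> e have ex: "(x1 - (real i - 1) * a) / a = (x2 - (real j - 1) * a) / a"
        and ey: "y1 / real m + (real i - 1) / real m = y2 / real m + (real j - 1) / real m"
        and ez: "(1 - real m * b) * z1 = (1 - real m * b) * z2" by auto
      from ey have "y1 + real i - 1 = y2 + real j - 1" using mpos by (simp add: field_simps)
      then have "real i - real j < 1" "real j - real i < 1" using u1 u2 by linarith+
      then have ij: "i = j" by linarith
      from ex ij a0 have "x1 = x2" by (simp add: field_simps)
      moreover from ez b1' have "z1 = z2" by simp
      moreover from ey ij mpos have "y1 = y2" by (simp add: field_simps)
      ultimately show ?thesis using w1e w2e by simp
    next
      case False
      with \<open>i \<le> m\<close> e have ez: "(1 - real m * b) * z1 = b * z2 + 1 - real m * b + b * (real j - real m - 1)" by auto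
      have "(1 - real m * b) * z1 < 1 - real m * b" using mb_pos z1 by simp
      moreover have "0 \<le> b * (real j - real m - 1)" using False b0 by auto
      moreover have "0 < b * z2" using b0 z2 by simp
      ultimately show ?thesis using ez by linarith
    qed
  next
    case False
    show ?thesis
    proof (cases "j \<le> m")
      case True
      with \<open>\<not> i \<le> m\<close> e have ez: "b * z1 + 1 - real m * b + b * (real i - real m - 1) = (1 - real m * b) * z2" by auto
      have "(1 - real m * b) * z2 < 1 - real m * b" using mb_pos z2 by simp
      moreover have "0 \<le> b * (real i - real m - 1)" using False b0 by auto
      moreover have "0 < b * z1" using b0 z1 by simp
      ultimately show ?thesis using ez by linarith
    next
      case False
      with \<open>\<not> i \<le> m\<close> e have ex: "(x1 - real m * a) / (1 - real m * a) = (x2 - real m * a) / (1 - real m * a)"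
        and ey: "real m * y1 - real i + real m + 1 = real m * y2 - real j + real m + 1"
        and ez: "b * z1 + 1 - real m * b + b * (real i - real m - 1) = b * z2 + 1 - real m * b + b * (real j - real m - 1)" by auto
      from ez have "b * (z1 + real i) = b * (z2 + real j)" by (simp add: algebra_simps)
      then have "z1 + real i = z2 + real j" using b0 by simp
      then have "real i - real j < 1" "real j - real i < 1" using z1 z2 by linarith+
      then have ij: "i = j" by linarith
      from ex a1' have "x1 = x2" by (simp add: field_simps)
      moreover from ez ij b0 have "z1 = z2" by simp
      moreover from ey ij mpos have "y1 = y2" by simp
      ultimately show ?thesis using w1e w2e by simp
    qed
  qed
qed

lemma code_F:
  assumes "w \<in> VV"
  shows "(THE i. i \<in> {1..2*m} \<and> w \<in> interior (OmegaF m a i)) = code (proj w)"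
proof -
  obtain x y z where w: "w = (x, y, z)" by (cases w) auto
  obtain i where i: "i \<in> {1..2*m}" "box i x y" and z: "0 < z" "z < 1" using assms unfolding V_iff w by auto
  have "code (proj w) = i" unfolding w proj_def using code_eq[OF i(2) i(1)] by simp
  moreover have "(THE i. i \<in> {1..2*m} \<and> w \<in> interior (OmegaF m a i)) = i"
  proof (rule the_equality)
    show "i \<in> {1..2*m} \<and> w \<in> interior (OmegaF m a i)" using i z int_F[OF i(1)] w by auto
    fix j assume "j \<in> {1..2*m} \<and> w \<in> interior (OmegaF m a j)"
    then have "j \<in> {1..2*m}" "box j x y" using int_F w by auto
    then show "j = i" using mem_P_unique[OF i(2) i(1)] box_in_P by blast
  qed
  ultimately show ?thesis by simp
qed

lemma code_range: "u \<in> UU \<Longrightarrow> code u \<in> {1..2*m}"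
  unfolding U_iff by (cases u) (auto simp: code_eq)

end

context hc begin

lemma orbit_unique:
  assumes g1: "good_orbit m a b q1" and g2: "good_orbit m a b q2" and e0: "q1 0 = q2 0"
  shows "q1 = q2"
proof -
  have s1: "\<And>t. fab m a b (q1 t) = q1 (t + 1)" "\<And>t. q1 t \<in> VV" using g1 unfolding good_orbit_def by auto
  have s2: "\<And>t. fab m a b (q2 t) = q2 (t + 1)" "\<And>t. q2 t \<in> VV" using g2 unfolding good_orbit_def by auto
  have fwd: "q1 (int n) = q2 (int n)" for n
  proof (induction n)
    case 0 then show ?case using e0 by simp
  next
    case (Suc n)
    have "q1 (int (Suc n)) = fab m a b (q1 (int n))" using s1(1)[of "int n"] by (simp add: add.commute)
    also have "\<dots> = fab m a b (q2 (int n))" using Suc by simp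
    also have "\<dots> = q2 (int (Suc n))" using s2(1)[of "int n"] by (simp add: add.commute)
    finally show ?case .
  qed
  have bwd: "q1 (- int n) = q2 (- int n)" for n
  proof (induction n)
    case 0 then show ?case using e0 by simp
  next
    case (Suc n)
    have "fab m a b (q1 (- int (Suc n))) = q1 (- int n)" using s1(1)[of "- int (Suc n)"] by simp
    also have "\<dots> = q2 (- int n)" using Suc by simp
    also have "\<dots> = fab m a b (q2 (- int (Suc n)))" using s2(1)[of "- int (Suc n)"] by simp
    finally show ?case using fab_inj s1(2) s2(2) by blast
  qed
  show ?thesis
  proof
    fix t :: int
    show "q1 t = q2 t"
    proof (cases "0 \<le> t")
      case True then show ?thesis using fwd[of "nat t"] by simp
    next
      case False then show ?thesis using bwd[of "nat (- t)"] by simp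
    qed
  qed
qed

lemma piab_eq:
  assumes g: "good_orbit m a b q"
  shows "piab m a b (q 0) = (\<lambda>t. code (proj (q t)))"
proof -
  define q' where "q' = (SOME q'. q' 0 = q 0 \<and> good_orbit m a b q')"
  have "q' 0 = q 0 \<and> good_orbit m a b q'" unfolding q'_def by (rule someI[of _ q]) (use g in auto)
  then have qq: "q' = q" using orbit_unique g by metis
  have V: "\<And>t. q t \<in> VV" using g unfolding good_orbit_def by auto
  show ?thesis unfolding piab_def Let_def q'_def[symmetric] qq using code_F[OF V] by simp
qed

lemma pia_eq: "pia m a u n = code ((fa m a ^^ n) u)"
  by (simp add: pia_def code_def)

lemma Xa_iter: "u \<in> Xa m a \<Longrightarrow> (fa m a ^^ n) u \<in> UU"
  unfolding Xa_def by blast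

lemma ray_in:
  assumes p: "p \<in> Xab m a b"
  shows "(\<lambda>n::nat. piab m a b p (int n - k)) \<in> pia m a ` Xa m a"
proof -
  obtain q where q0: "q 0 = p" and g: "good_orbit m a b q" using p unfolding Xab_def by auto
  have s: "\<And>t. fab m a b (q t) = q (t + 1)" "\<And>t. q t \<in> VV" using g unfolding good_orbit_def by auto
  define u where "u = proj (q (- k))"
  have it: "(fa m a ^^ n) u = proj (q (- k + int n))" for n
  proof (induction n)
    case 0 then show ?case by (simp add: u_def)
  next
    case (Suc n)
    have "(fa m a ^^ Suc n) u = fa m a (proj (q (- k + int n)))" using Suc by simp
    also have "\<dots> = proj (fab m a b (q (- k + int n)))" by (simp add: proj_fab)
    also have "\<dots> = proj (q (- k + int (Suc n)))" using s(1)[of "- k + int n"] by (simp add: algebra_simps)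
    finally show ?case .
  qed
  have "u \<in> Xa m a" unfolding Xa_def using it V_proj s(2) by auto
  moreover have "(\<lambda>n::nat. piab m a b p (int n - k)) = pia m a u"
  proof
    fix n
    show "piab m a b p (int n - k) = pia m a u n"
      unfolding pia_eq it q0[symmetric] piab_eq[OF g] by (simp add: algebra_simps)
  qed
  ultimately show ?thesis by auto
qed

lemma piab_range:
  assumes p: "p \<in> Xab m a b"
  shows "piab m a b p t \<in> {1..2*m}"
proof -
  obtain q where q0: "q 0 = p" and g: "good_orbit m a b q" using p unfolding Xab_def by auto
  have "q t \<in> VV" using g unfolding good_orbit_def by auto
  then show ?thesis using piab_eq[OF g] q0 code_range V_proj by metis
qed

end

context hc begin

definition zs :: real where "zs = (1 - real m * b) / (1 - b)"
definition BB :: "real \<Rightarrow> real" where "BB w = real m * a + (1 - real m * a) * w"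

lemma b_lt1: "b < 1"
proof -
  have "1 / real m \<le> 1" using m2 by simp
  then show ?thesis using b1 by linarith
qed

lemma zs_unit: "0 < zs \<and> zs < 1"
proof -
  have "1 * b < real m * b" using m2 b0 by (intro mult_strict_right_mono) auto
  then have "1 - real m * b < 1 - b" by simp
  then show ?thesis using mb_pos b_lt1 unfolding zs_def by (simp add: field_simps)
qed

lemma zs_fix: "b * zs + 1 - real m * b = zs"
  using b_lt1 unfolding zs_def by (simp add: field_simps)

lemma BB_unit: "0 < w \<Longrightarrow> w < 1 \<Longrightarrow> real m * a < BB w \<and> BB w < 1"
proof -
  assume w: "0 < w" "w < 1"
  have p: "0 < 1 - real m * a" using ma1 by simp
  have "(1 - real m * a) * w < 1 - real m * a" "0 < (1 - real m * a) * w" using p w by auto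
  then show ?thesis unfolding BB_def by linarith
qed

lemma BB_iter: "0 < w \<Longrightarrow> w < 1 \<Longrightarrow> 0 < (BB ^^ k) w \<and> (BB ^^ k) w < 1"
proof (induction k)
  case 0 then show ?case by simp
next
  case (Suc k)
  have "0 \<le> real m * a" using a0 by simp
  then show ?case using BB_unit[of "(BB ^^ k) w"] Suc by simp
qed

lemma back_box: "0 < w \<Longrightarrow> w < 1 \<Longrightarrow> 0 < v \<Longrightarrow> v < 1 \<Longrightarrow> box (m + 1) (BB w) (v / real m)"
  using BB_unit[of w] mpos by (simp add: box_def divide_simps)

lemma back_step:
  assumes "0 < w" "w < 1" "0 < v" "v < 1"
  shows "fab m a b (BB w, v / real m, zs) = (w, v, zs)"
proof -
  have r: "m + 1 \<in> {1..2*m}" using m2 by auto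
  have "1 - real m * a \<noteq> 0" using ma1 by simp
  then show ?thesis using fab_box[OF back_box[OF assms] r] mpos zs_fix
    by (simp add: BB_def field_simps)
qed

definition orb :: "real \<Rightarrow> real \<Rightarrow> int \<Rightarrow> real \<times> real \<times> real" where
  "orb x y t = (if 0 \<le> t then (fab m a b ^^ nat t) (x, y, zs)
     else ((BB ^^ nat (- t)) x, y / real m ^ nat (- t), zs))"

lemma orb_neg: "t < 0 \<Longrightarrow> nat (- t) = Suc k \<Longrightarrow> orb x y t = (BB ((BB ^^ k) x), (y / real m ^ k) / real m, zs)"
  by (simp add: orb_def field_simps)

lemma orb_neg1:
  assumes "t < 0" "nat (- t) = Suc k"
  shows "orb x y (t + 1) = ((BB ^^ k) x, y / real m ^ k, zs)"
proof (cases "t + 1 = 0")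
  case True
  then have "k = 0" using assms by simp
  then show ?thesis using True by (simp add: orb_def)
next
  case False
  then have "\<not> 0 \<le> t + 1" "nat (- (t + 1)) = k" using assms by auto
  then show ?thesis by (simp add: orb_def)
qed

lemma V_of_proj: "proj w \<in> UU \<Longrightarrow> 0 < snd (snd w) \<and> snd (snd w) < 1 \<Longrightarrow> w \<in> VV"
  unfolding V_iff U_iff proj_def by auto

lemma fw_lemma:
  assumes u: "(x, y) \<in> Xa m a"
  shows "(fab m a b ^^ n) (x, y, zs) \<in> VV \<and> proj ((fab m a b ^^ n) (x, y, zs)) = (fa m a ^^ n) (x, y)"
proof (induction n)
  case 0
  have "(x, y) \<in> UU" using Xa_iter[OF u, of 0] by simp
  then show ?case using zs_unit unfolding V_iff U_iff by (simp add: proj_def)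
next
  case (Suc n)
  let ?w = "(fab m a b ^^ n) (x, y, zs)"
  have pr: "proj ((fab m a b ^^ Suc n) (x, y, zs)) = (fa m a ^^ Suc n) (x, y)"
    using Suc proj_fab[of ?w] by simp
  have pU: "proj ((fab m a b ^^ Suc n) (x, y, zs)) \<in> UU" unfolding pr by (rule Xa_iter[OF u])
  have "0 < snd (snd (fab m a b ?w)) \<and> snd (snd (fab m a b ?w)) < 1" using fab_z Suc by blast
  then have "0 < snd (snd ((fab m a b ^^ Suc n) (x, y, zs))) \<and> snd (snd ((fab m a b ^^ Suc n) (x, y, zs))) < 1" by simp
  then show ?case using pU pr V_of_proj by blast
qed

lemma orb_good:
  assumes u: "(x, y) \<in> Xa m a"
  shows "good_orbit m a b (orb x y)"
proof -
  have "(x, y) \<in> UU" using Xa_iter[OF u, of 0] by simp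
  then obtain i where i: "i \<in> {1..2*m}" "box i x y" unfolding U_iff by auto
  have xy: "0 < x" "x < 1" "0 < y" "y < 1" using box_unit[OF i(2) i(1)] by auto
  note fw = fw_lemma[OF u]
  have v_pos: "0 < y / real m ^ k" "y / real m ^ k < 1" for k
  proof -
    have "1 \<le> real m ^ k" using m2 by simp
    then have "y < real m ^ k" "0 < real m ^ k" using xy by linarith+
    then show "0 < y / real m ^ k" "y / real m ^ k < 1" using xy by (auto simp: divide_simps)
  qed
  have step: "fab m a b (orb x y t) = orb x y (t + 1)" for t
  proof (cases "0 \<le> t")
    case True
    then have "nat (t + 1) = Suc (nat t)" by simp
    then show ?thesis using True by (simp add: orb_def)
  next
    case False
    then obtain k where k: "nat (- t) = Suc k" by (metis gr0_implies_Suc zero_less_nat_eq neg_0_less_iff_less not_le)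
    have "fab m a b (BB ((BB ^^ k) x), (y / real m ^ k) / real m, zs) = ((BB ^^ k) x, y / real m ^ k, zs)"
      using back_step BB_iter[OF xy(1,2)] v_pos by blast
    moreover have tneg: "t < 0" using False by simp
    ultimately show ?thesis by (simp only: orb_neg[OF tneg k] orb_neg1[OF tneg k])
  qed
  have inV: "orb x y t \<in> VV" for t
  proof (cases "0 \<le> t")
    case True then show ?thesis using fw by (simp add: orb_def)
  next
    case False
    then obtain k where k: "nat (- t) = Suc k" by (metis gr0_implies_Suc zero_less_nat_eq neg_0_less_iff_less not_le)
    have r: "m + 1 \<in> {1..2*m}" using m2 by auto
    have "box (m + 1) (BB ((BB ^^ k) x)) ((y / real m ^ k) / real m)"
      using back_box BB_iter[OF xy(1,2)] v_pos by blast
    then show ?thesis using orb_neg[OF _ k] False zs_unit r unfolding V_iff by auto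
  qed
  show ?thesis unfolding good_orbit_def using step inV by auto
qed

lemma construct:
  assumes u: "u \<in> Xa m a"
  shows "\<exists>p\<in>Xab m a b. \<forall>n::nat. piab m a b p (int n - int N) = pia m a u n"
proof -
  obtain x y where uxy: "u = (x, y)" by (cases u) auto
  have g: "good_orbit m a b (orb x y)" using orb_good u uxy by simp
  define q where "q = (\<lambda>t. orb x y (t + int N))"
  have gq: "good_orbit m a b q" using g unfolding good_orbit_def q_def by (simp add: algebra_simps)
  have "q 0 \<in> Xab m a b" unfolding Xab_def using gq by auto
  moreover have "piab m a b (q 0) (int n - int N) = pia m a u n" for n
  proof -
    have V: "proj ((fab m a b ^^ n) (x, y, zs)) = (fa m a ^^ n) (x, y)" using fw_lemma u uxy by blast
    have "piab m a b (q 0) (int n - int N) = code (proj (q (int n - int N)))" using piab_eq[OF gq] by simp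
    also have "\<dots> = code (proj ((fab m a b ^^ n) (x, y, zs)))" by (simp add: q_def orb_def)
    also have "\<dots> = pia m a u n" using V by (simp add: pia_eq uxy)
    finally show ?thesis .
  qed
  ultimately show ?thesis by blast
qed

end

lemma tendsto_fun_pointwise:
  fixes f :: "'c \<Rightarrow> 'a \<Rightarrow> 'b::topological_space"
  shows "(f \<longlongrightarrow> l) F \<longleftrightarrow> (\<forall>i. ((\<lambda>c. f c i) \<longlongrightarrow> l i) F)"
proof -
  have "(f \<longlongrightarrow> l) F \<longleftrightarrow> limitin (product_topology (\<lambda>i. euclidean) UNIV) f l F"
    by (simp add: euclidean_product_topology)
  also have "\<dots> \<longleftrightarrow> (\<forall>i. limitin euclidean (\<lambda>c. f c i) (l i) F)"
    by (simp add: limitin_componentwise)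
  finally show ?thesis by simp
qed

lemma closed_nat_set: "closed (S :: nat set)"
  unfolding closed_def by (rule open_discrete)

lemma ray_cont: "continuous_on UNIV (\<lambda>\<omega>::int \<Rightarrow> nat. (\<lambda>n::nat. \<omega> (int n - k)))"
  by (intro continuous_on_coordinatewise_then_product continuous_on_product_coordinates)

lemma coord_cont: "continuous_on UNIV (\<lambda>\<omega>::int \<Rightarrow> nat. \<omega> n)"
  by (rule continuous_on_product_coordinates)

context hc begin

definition TT :: "(int \<Rightarrow> nat) set" where
  "TT = {\<omega> :: int \<Rightarrow> nat. (\<forall>n. \<omega> n \<in> {1..2*m}) \<and>
       (\<forall>k::int. k \<ge> 1 \<longrightarrow> (\<lambda>n::nat. \<omega> (int n - k)) \<in> SigmaHCplus m a)}"

lemma T_eq: "TT = (\<Inter>n. (\<lambda>\<omega>::int \<Rightarrow> nat. \<omega> n) -` {1..2*m}) \<inter>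
      (\<Inter>k\<in>{k::int. k \<ge> 1}. (\<lambda>\<omega>::int \<Rightarrow> nat. (\<lambda>n::nat. \<omega> (int n - k))) -` SigmaHCplus m a)"
  unfolding TT_def by blast

lemma T_closed: "closed TT"
  unfolding T_eq
proof (intro closed_Int closed_INT ballI)
  fix n :: int
  show "closed ((\<lambda>\<omega>::int \<Rightarrow> nat. \<omega> n) -` {1..2*m})"
    by (rule closed_vimage[OF closed_nat_set coord_cont])
next
  fix k :: int
  show "closed ((\<lambda>\<omega>::int \<Rightarrow> nat. (\<lambda>n::nat. \<omega> (int n - k))) -` SigmaHCplus m a)"
    unfolding SigmaHCplus_def by (rule closed_vimage[OF closed_closure ray_cont])
qed

lemma img_sub: "piab m a b ` Xab m a b \<subseteq> TT"
proof
  fix \<omega> assume "\<omega> \<in> piab m a b ` Xab m a b"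
  then obtain p where p: "p \<in> Xab m a b" "\<omega> = piab m a b p" by auto
  have r: "\<forall>n. \<omega> n \<in> {1..2*m}" using piab_range[OF p(1)] unfolding p(2) by blast
  have "(\<lambda>n::nat. \<omega> (int n - k)) \<in> SigmaHCplus m a" for k
  proof -
    have "(\<lambda>n::nat. \<omega> (int n - k)) \<in> pia m a ` Xa m a" unfolding p(2) by (rule ray_in[OF p(1)])
    then show ?thesis unfolding SigmaHCplus_def using closure_subset by (rule subsetD[rotated])
  qed
  then show "\<omega> \<in> TT" unfolding TT_def using r by blast
qed

lemma le: "SigmaHC m a b \<subseteq> TT"
  unfolding SigmaHC_def by (rule closure_minimal[OF img_sub T_closed])

lemma approx:
  assumes w: "\<omega> \<in> TT"
  shows "\<exists>p\<in>Xab m a b. \<forall>t. \<bar>t\<bar> \<le> int N \<longrightarrow> piab m a b p t = \<omega> t"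
proof -
  have "(\<lambda>n::nat. \<omega> (int n - int (N + 1))) \<in> closure (pia m a ` Xa m a)"
    using w unfolding SigmaHCplus_def TT_def by simp
  then obtain f where f: "\<And>j. f j \<in> pia m a ` Xa m a" and lim: "f \<longlonglongrightarrow> (\<lambda>n::nat. \<omega> (int n - int (N + 1)))"
    unfolding closure_sequential by blast
  have "\<forall>n. eventually (\<lambda>j. f j n = \<omega> (int n - int (N + 1))) sequentially"
    using lim unfolding tendsto_fun_pointwise tendsto_discrete by blast
  then have "eventually (\<lambda>j. \<forall>n\<in>{..2*N+2}. f j n = \<omega> (int n - int (N + 1))) sequentially"
    by (intro eventually_ball_finite) auto
  then obtain j where j: "\<forall>n\<in>{..2*N+2}. f j n = \<omega> (int n - int (N + 1))"
    unfolding eventually_sequentially by blast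
  obtain u where u: "u \<in> Xa m a" "f j = pia m a u" using f[of j] by blast
  obtain p where p: "p \<in> Xab m a b" "\<forall>n::nat. piab m a b p (int n - int (N + 1)) = pia m a u n"
    using construct[OF u(1)] by blast
  have "piab m a b p t = \<omega> t" if "\<bar>t\<bar> \<le> int N" for t
  proof -
    define n where "n = nat (t + int (N + 1))"
    have tn: "t = int n - int (N + 1)" "n \<in> {..2*N+2}" using that unfolding n_def by auto
    have "piab m a b p t = pia m a u n" using p(2) tn(1) by simp
    also have "\<dots> = f j n" using u(2) by simp
    also have "\<dots> = \<omega> t" using j tn by simp
    finally show ?thesis .
  qed
  then show ?thesis using p(1) by blast
qed

lemma ge: "TT \<subseteq> SigmaHC m a b"
proof
  fix \<omega> assume w: "\<omega> \<in> TT"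
  have "\<forall>N. \<exists>p. p \<in> Xab m a b \<and> (\<forall>t. \<bar>t\<bar> \<le> int N \<longrightarrow> piab m a b p t = \<omega> t)"
  proof
    fix N
    obtain p where "p \<in> Xab m a b" "\<forall>t. \<bar>t\<bar> \<le> int N \<longrightarrow> piab m a b p t = \<omega> t"
      using approx[OF w, of N] by blast
    then show "\<exists>p. p \<in> Xab m a b \<and> (\<forall>t. \<bar>t\<bar> \<le> int N \<longrightarrow> piab m a b p t = \<omega> t)" by blast
  qed
  then obtain P where P: "\<forall>N. P N \<in> Xab m a b \<and> (\<forall>t. \<bar>t\<bar> \<le> int N \<longrightarrow> piab m a b (P N) t = \<omega> t)"
    by (rule choice[THEN exE])
  have "(\<lambda>N. piab m a b (P N)) \<longlonglongrightarrow> \<omega>"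
    unfolding tendsto_fun_pointwise tendsto_discrete
  proof
    fix t :: int
    show "eventually (\<lambda>N. piab m a b (P N) t = \<omega> t) sequentially"
      unfolding eventually_sequentially
    proof (intro exI allI impI)
      fix N assume "nat \<bar>t\<bar> \<le> N"
      then have "\<bar>t\<bar> \<le> int N" by linarith
      then show "piab m a b (P N) t = \<omega> t" using P[rule_format, of N] by blast
    qed
  qed
  moreover have "\<forall>N. piab m a b (P N) \<in> piab m a b ` Xab m a b"
  proof
    fix N show "piab m a b (P N) \<in> piab m a b ` Xab m a b" using P[rule_format, of N] by (intro imageI) blast
  qed
  ultimately show "\<omega> \<in> SigmaHC m a b"
    unfolding SigmaHC_def closure_sequential by (intro exI[of _ "\<lambda>N. piab m a b (P N)"] conjI)
qed

end

theorem proposition2p2: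
  fixes m :: nat and a b :: real
  assumes "m \<ge> 2" and "0 < a" and "a < 1 / real m" and "0 < b" and "b < 1 / real m"
  shows "SigmaHC m a b =
    {\<omega> :: int \<Rightarrow> nat. (\<forall>n. \<omega> n \<in> {1..2*m}) \<and>
       (\<forall>k::int. k \<ge> 1 \<longrightarrow> (\<lambda>n::nat. \<omega> (int n - k)) \<in> SigmaHCplus m a)}"
proof -
  interpret hc m a b using assms by unfold_locales
  have "SigmaHC m a b = TT" by (rule equalityI[OF le ge])
  then show ?thesis unfolding TT_def .
qed

end
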